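(* Let $\phi:\mathcal A\to\mathcal A$ be a peak selection for $(C_u)_{u\in\mathcal A}$ satisfying (AC1) and (AC2) with constants $\gamma,\delta$, and let $\alpha:=\tfrac12(1-\delta)\cos\gamma$ be the constant used in the definition of the stepsize sets $S(\cdot)$. If $u_0\in\operatorname{Ran}\phi$, $\nabla\mathcal E(u_0)\ne0$ and $\phi$ is continuous at $u_0$, then there exist an open neighborhood $V$ of $u_0$ and $s^*>0$ such that $S(u)\subset[s^*,+\infty)$ for every $u\in V\cap\operatorname{Ran}\phi$.
   Context: $\mathcal H$ is a real Hilbert space with inner product $\langle\cdot,\cdot\rangle$ and norm $\|\cdot\|$; $\mathcal E\in C^1(\mathcal H;\mathbb R)$; $\mathcal A\subset\mathcal H$ is open; $B(u,r)$ is the open ball. For a closed cone $C$, $\operatorname{span}C$ is the smallest closed linear subspace containing $C$, $\operatorname{int}C$ is the interior of $C$ relative to $\operatorname{span}C$; $d\perp C$ means $d\perp\operatorname{span}C$. A peak selection for $(C_u)_{u\in\mathcal A}$ is a map $\phi:\mathcal A\to\mathcal A$ such that for all $u\in\mathcal A$: (1) $C_u$ is a closed cone with vertex $0$; (2) $\phi(u)\in\operatorname{int}C_u$; (3) $\phi(v)=\phi(u)$ for every $v\in\operatorname{int}C_u$; (4) $\phi(u)$ is a global maximum point of $\mathcal E$ on $C_u$. $A_\gamma(d):=\{d':\|d'\|=\|d\|,\ \arccos(\langle d,d'\rangle/(\|d\|\|d'\|))\le\gamma\}$ for $d\ne0$, $A_\gamma(0)=\{0\}$; $I\,S:=\{ts:t\in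 I,s\in S\}$. (AC1): for all $u\in\mathcal A$, $u\in C_u$. (AC2): there exist $\gamma\in(0,\pi/2)$, $\delta\in(0,1)$ such that for every $u_0\in\operatorname{Ran}\phi$ there is $r>0$ such that for all $\tilde u_0\in\operatorname{Ran}\phi\cap B(u_0,r)$ and all $d\in B(0,r)$ with $d\perp C_{\tilde u_0}$ and $\tilde u_0+d\in\mathcal A$: $C_{\tilde u_0+d}\cap B(u_0,r)\subset C_{\tilde u_0}+[1-\delta,1+\delta]A_\gamma(d)$. Stepsizes: for $u_0\in\operatorname{Ran}\phi$ with $\nabla\mathcal E(u_0)\ne0$, $S^*(u_0):=\{s>0: u_s:=u_0-s\nabla\mathcal E(u_0)/\|\nabla\mathcal E(u_0)\|\in\mathcal A \text{ and } \mathcal E(\phi(u_s))-\mathcal E(u_0)<-\alpha s\|\nabla\mathcal E(u_0)\|\}$ and $S(u_0):=S^*(u_0)\cap[\tfrac12\sup S^*(u_0),+\infty)$. *)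

theory Defs
  imports "HOL-Analysis.Analysis"
begin

definition cspan :: "'a::real_normed_vector set \<Rightarrow> 'a set" where
  "cspan C = closure (span C)"

definition int_rel :: "'a::real_normed_vector set \<Rightarrow> 'a set" where
  "int_rel C = {x \<in> C. \<exists>e>0. ball x e \<inter> cspan C \<subseteq> C}"

definition orth_cone :: "'a::real_inner \<Rightarrow> 'a set \<Rightarrow> bool" where
  "orth_cone d C \<longleftrightarrow> (\<forall>v\<in>cspan C. inner d v = 0)"

definition A_gamma :: "real \<Rightarrow> 'a::real_inner \<Rightarrow> 'a set" where
  "A_gamma \<gamma> d = (if d = 0 then {0} else
     {d'. norm d' = norm d \<and> arccos (inner d d' / (norm d * norm d')) \<le> \<gamma>})"

definition peak_selection ::
  "('a::real_inner \<Rightarrow> real) \<Rightarrow> 'a set \<Rightarrow> ('a \<Rightarrow> 'a set) \<Rightarrow> ('a \<Rightarrow> 'a) \<Rightarrow> bool" where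
  "peak_selection E A C \<phi> \<longleftrightarrow>
     (\<forall>u\<in>A. \<phi> u \<in> A \<and> closed (C u) \<and> cone (C u) \<and> \<phi> u \<in> int_rel (C u)
        \<and> (\<forall>v\<in>int_rel (C u) \<inter> A. \<phi> v = \<phi> u)
        \<and> (\<forall>w\<in>C u. E w \<le> E (\<phi> u)))"

definition AC1 :: "'a set \<Rightarrow> ('a \<Rightarrow> 'a set) \<Rightarrow> bool" where
  "AC1 A C \<longleftrightarrow> (\<forall>u\<in>A. u \<in> C u)"

definition AC2 ::
  "'a::real_inner set \<Rightarrow> ('a \<Rightarrow> 'a set) \<Rightarrow> ('a \<Rightarrow> 'a) \<Rightarrow> real \<Rightarrow> real \<Rightarrow> bool" where
  "AC2 A C \<phi> \<gamma> \<delta> \<longleftrightarrow> 0 < \<gamma> \<and> \<gamma> < pi / 2 \<and> 0 < \<delta> \<and> \<delta> < 1 \<and>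
     (\<forall>u0\<in>\<phi> ` A. \<exists>r>0. \<forall>u0'\<in>\<phi> ` A \<inter> ball u0 r. \<forall>d\<in>ball 0 r.
        orth_cone d (C u0') \<and> u0' + d \<in> A \<longrightarrow>
        C (u0' + d) \<inter> ball u0 r \<subseteq>
          {x + t *\<^sub>R y | x t y. x \<in> C u0' \<and> t \<in> {1 - \<delta> .. 1 + \<delta>} \<and> y \<in> A_gamma \<gamma> d})"

definition Sstar ::
  "('a::real_inner \<Rightarrow> real) \<Rightarrow> ('a \<Rightarrow> 'a) \<Rightarrow> 'a set \<Rightarrow> ('a \<Rightarrow> 'a) \<Rightarrow> real \<Rightarrow> 'a \<Rightarrow> real set" where
  "Sstar E gradE A \<phi> \<alpha> u0 =
     {s. s > 0 \<and> (let us = u0 - (s / norm (gradE u0)) *\<^sub>R gradE u0 in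
          us \<in> A \<and> E (\<phi> us) - E u0 < - \<alpha> * s * norm (gradE u0))}"

text \<open>S(u0) = S*(u0) \<inter> [sup S*(u0)/2, +\<infinity>), the supremum taken in the extended reals
  (so S(u0) is empty if S*(u0) is unbounded or empty).\<close>
definition Sstep ::
  "('a::real_inner \<Rightarrow> real) \<Rightarrow> ('a \<Rightarrow> 'a) \<Rightarrow> 'a set \<Rightarrow> ('a \<Rightarrow> 'a) \<Rightarrow> real \<Rightarrow> 'a \<Rightarrow> real set" where
  "Sstep E gradE A \<phi> \<alpha> u0 =
     {s \<in> Sstar E gradE A \<phi> \<alpha> u0. Sup (ereal ` Sstar E gradE A \<phi> \<alpha> u0) / 2 \<le> ereal s}"

end

theory Submission
  imports Defs
begin

lemma mvt_bound:
  fixes E :: "'a::real_inner \<Rightarrow> real"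
  assumes grad: "\<And>u. (E has_derivative (\<lambda>h. inner (gradE u) h)) (at u)"
    and B: "\<And>z. z \<in> ball c R \<Longrightarrow> norm (gradE z - a) \<le> \<epsilon>"
    and x: "x \<in> ball c R" and w: "w \<in> ball c R"
  shows "\<bar>(E w - inner a w) - (E x - inner a x)\<bar> \<le> \<epsilon> * norm (w - x)"
proof -
  have d: "((\<lambda>z. E z - inner a z) has_derivative (\<lambda>h. inner (gradE z - a) h)) (at z within ball c R)" for z
  proof -
    have "((\<lambda>z. E z - inner a z) has_derivative (\<lambda>h. inner (gradE z) h - inner a h)) (at z)"
    proof -
      have h1: "(E has_derivative (\<lambda>h. inner (gradE z) h)) (at z)" by (rule grad)
      have h2: "((\<lambda>z. inner a z) has_derivative (\<lambda>h. inner a h)) (at z)"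
        by (rule has_derivative_inner_right[OF has_derivative_ident])
      show ?thesis using has_derivative_diff[OF h1 h2] .
    qed
    then have "((\<lambda>z. E z - inner a z) has_derivative (\<lambda>h. inner (gradE z - a) h)) (at z)"
      by (simp add: inner_diff_left)
    then show ?thesis by (rule has_derivative_at_withinI)
  qed
  have o: "onorm (\<lambda>h. inner (gradE z - a) h) \<le> \<epsilon>" if "z \<in> ball c R" for z
  proof -
    have "0 \<le> \<epsilon>" using B[OF that] norm_ge_zero order_trans by blast
    moreover have "norm (inner (gradE z - a) h) \<le> \<epsilon> * norm h" for h
      using Cauchy_Schwarz_ineq2[of "gradE z - a" h] B[OF that]
      by (simp add: mult_right_mono order_trans)
    ultimately show ?thesis by (rule onorm_bound)
  qed
  show ?thesis
    using differentiable_bound[OF convex_ball d o w x] by simp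
qed

lemma orth_grad:
  fixes E :: "'a::real_inner \<Rightarrow> real"
  assumes grad: "\<And>u. (E has_derivative (\<lambda>h. inner (gradE u) h)) (at u)"
    and ui: "u \<in> int_rel C" and mx: "\<And>w. w \<in> C \<Longrightarrow> E w \<le> E u"
  shows "orth_cone (c *\<^sub>R gradE u) C"
proof -
  from ui obtain e where uC: "u \<in> C" and e: "e > 0" and be: "ball u e \<inter> cspan C \<subseteq> C"
    unfolding int_rel_def by auto
  have sp: "inner (gradE u) v = 0" if v: "v \<in> span C" for v
  proof (cases "v = 0")
    case True then show ?thesis by simp
  next
    case False
    have der: "((\<lambda>t. E (u + t *\<^sub>R v)) has_real_derivative inner (gradE u) v) (at 0)"
    proof -
      have "((\<lambda>t. u + t *\<^sub>R v) has_derivative (\<lambda>t. t *\<^sub>R v)) (at 0)"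
        by (auto intro!: derivative_eq_intros)
      from has_derivative_compose[OF this grad[of "u + 0 *\<^sub>R v"]]
      have "((\<lambda>t. E (u + t *\<^sub>R v)) has_derivative (\<lambda>t. inner (gradE u) (t *\<^sub>R v))) (at 0)"
        by (simp add: o_def)
      then show ?thesis
        by (simp add: has_field_derivative_def mult.commute[of _ "gradE u \<bullet> v"])
    qed
    have pos: "0 < e / norm v" using e False by simp
    have "\<forall>t. \<bar>0 - t\<bar> < e / norm v \<longrightarrow> E (u + t *\<^sub>R v) \<le> E (u + 0 *\<^sub>R v)"
    proof (intro allI impI)
      fix t :: real assume t: "\<bar>0 - t\<bar> < e / norm v"
      have "norm (t *\<^sub>R v) < e" using t False by (simp add: field_simps)
      then have "u + t *\<^sub>R v \<in> ball u e" by (simp add: dist_norm)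
      moreover have "u + t *\<^sub>R v \<in> cspan C"
        unfolding cspan_def
        by (meson closure_subset span_add span_base span_scale subsetD uC v)
      ultimately show "E (u + t *\<^sub>R v) \<le> E (u + 0 *\<^sub>R v)" using be mx by auto
    qed
    from DERIV_local_max[OF der pos this] show ?thesis .
  qed
  have "cspan C \<subseteq> {v. inner (gradE u) v = 0}"
    unfolding cspan_def by (rule closure_minimal) (use sp closed_hyperplane in auto)
  then show ?thesis unfolding orth_cone_def by auto
qed

lemma angle_bound:
  fixes d :: "'a::real_inner"
  assumes "d \<noteq> 0" "y \<in> A_gamma \<gamma> d" "0 \<le> \<gamma>" "\<gamma> \<le> pi"
  shows "inner d y \<ge> (norm d)^2 * cos \<gamma>"
proof -
  from assms have ny: "norm y = norm d" and ac: "arccos (inner d y / (norm d * norm y)) \<le> \<gamma>"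
    unfolding A_gamma_def by auto
  define c where "c = inner d y / (norm d * norm y)"
  have pos: "norm d * norm y > 0" using assms ny by simp
  have "\<bar>c\<bar> \<le> 1" unfolding c_def using Cauchy_Schwarz_ineq2[of d y] pos
    by (simp add: abs_div divide_le_eq_1)
  then have cc: "cos (arccos c) = c" by (simp add: cos_arccos_abs)
  have c1: "-1 \<le> c" "c \<le> 1" using \<open>\<bar>c\<bar> \<le> 1\<close> by auto
  have ac': "arccos c \<le> \<gamma>" using ac by (simp add: c_def)
  have "cos \<gamma> \<le> cos (arccos c)"
    using ac' assms(3,4) arccos_lbound[OF c1] arccos_ubound[OF c1]
    by (subst cos_mono_le_eq) auto
  then have "cos \<gamma> \<le> c" using cc by simp
  then have "cos \<gamma> * (norm d * norm y) \<le> inner d y" unfolding c_def using pos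
    by (simp add: le_divide_eq)
  then show ?thesis using ny by (simp add: power2_eq_square mult.commute)
qed

theorem mainTheorem2:
  fixes E :: "'a::{real_inner, complete_space} \<Rightarrow> real"
    and gradE :: "'a \<Rightarrow> 'a"
    and A :: "'a set" and C :: "'a \<Rightarrow> 'a set" and \<phi> :: "'a \<Rightarrow> 'a"
    and \<gamma> \<delta> :: real and u0 :: 'a
  assumes grad: "\<And>u. (E has_derivative (\<lambda>h. inner (gradE u) h)) (at u)"
    and grad_cont: "continuous_on UNIV gradE"
    and A_open: "open A"
    and peak: "peak_selection E A C \<phi>"
    and ac1: "AC1 A C"
    and ac2: "AC2 A C \<phi> \<gamma> \<delta>"
    and u0: "u0 \<in> \<phi> ` A"
    and grad_nz: "gradE u0 \<noteq> 0"
    and cont: "continuous (at u0) \<phi>"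
  shows "\<exists>V s_star. open V \<and> u0 \<in> V \<and> s_star > 0 \<and>
           (\<forall>u\<in>V \<inter> \<phi> ` A. gradE u \<noteq> 0 \<longrightarrow>
              Sstep E gradE A \<phi> ((1 - \<delta>) * cos \<gamma> / 2) u \<subseteq> {s_star..})"
proof -
  define \<alpha> where "\<alpha> = (1 - \<delta>) * cos \<gamma> / 2"
  have gam: "0 < \<gamma>" "\<gamma> < pi / 2" and del: "0 < \<delta>" "\<delta> < 1"
    using ac2 unfolding AC2_def by auto
  from ac2 u0 obtain r where r: "r > 0" and rP: "\<forall>u0'\<in>\<phi> ` A \<inter> ball u0 r. \<forall>d\<in>ball 0 r.
        orth_cone d (C u0') \<and> u0' + d \<in> A \<longrightarrow>
        C (u0' + d) \<inter> ball u0 r \<subseteq>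
          {x + t *\<^sub>R y | x t y. x \<in> C u0' \<and> t \<in> {1 - \<delta> .. 1 + \<delta>} \<and> y \<in> A_gamma \<gamma> d}"
    unfolding AC2_def by blast
  have fixp: "u \<in> A \<and> \<phi> u = u" if "u \<in> \<phi> ` A" for u
  proof -
    from that obtain w where w: "w \<in> A" "u = \<phi> w" by auto
    then have "u \<in> A" "u \<in> int_rel (C w)" using peak unfolding peak_selection_def by auto
    moreover have "\<forall>v\<in>int_rel (C w) \<inter> A. \<phi> v = \<phi> w" using peak w unfolding peak_selection_def by auto
    ultimately show ?thesis using w by auto
  qed
  have u0A: "u0 \<in> A" and pu0: "\<phi> u0 = u0" using fixp[OF u0] by auto
  define g0 where "g0 = norm (gradE u0)"
  have g0: "g0 > 0" using grad_nz by (simp add: g0_def)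
  have cg: "cos \<gamma> > 0" "cos \<gamma> \<le> 1" using gam by (auto intro: cos_gt_zero_pi)
  define \<epsilon> where "\<epsilon> = g0 * cos \<gamma> / 16"
  have eps: "\<epsilon> > 0" "\<epsilon> \<le> g0 / 16" using g0 cg by (auto simp: \<epsilon>_def)
  have "continuous (at u0) gradE" using grad_cont by (simp add: continuous_on_eq_continuous_at)
  then obtain \<rho>1 where \<rho>1: "\<rho>1 > 0" and \<rho>1P: "\<And>z. dist z u0 < \<rho>1 \<Longrightarrow> dist (gradE z) (gradE u0) < \<epsilon>"
    using eps unfolding continuous_at_eps_delta by blast
  have "min r (\<rho>1/2) > 0" using r \<rho>1 by simp
  then obtain \<eta> where \<eta>: "\<eta> > 0" and \<eta>P: "\<And>v. dist v u0 < \<eta> \<Longrightarrow> dist (\<phi> v) u0 < min r (\<rho>1/2)"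
    using cont pu0 unfolding continuous_at_eps_delta by metis
  obtain \<rho>A where \<rho>A: "\<rho>A > 0" "ball u0 \<rho>A \<subseteq> A" using A_open u0A open_contains_ball by blast
  define m where "m = min (min r \<eta>) (min \<rho>A \<rho>1)"
  have m: "m > 0" "m \<le> r" "m \<le> \<eta>" "m \<le> \<rho>A" "m \<le> \<rho>1" using r \<eta> \<rho>A \<rho>1 by (auto simp: m_def)
  have key: "gradE u \<noteq> 0 \<and> s \<in> Sstar E gradE A \<phi> \<alpha> u"
    if uA: "u \<in> \<phi> ` A" and du: "dist u u0 < m/2" and s: "0 < s" "s \<le> m/8" for u s
  proof -
    have uA': "u \<in> A" and pu: "\<phi> u = u" using fixp[OF uA] by auto
    have ui: "u \<in> int_rel (C u)" and umax: "\<And>w. w \<in> C u \<Longrightarrow> E w \<le> E u"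
      using peak uA' pu unfolding peak_selection_def by metis+
    define g where "g = gradE u"
    define ng where "ng = norm g"
    have "dist (gradE u) (gradE u0) < \<epsilon>" using \<rho>1P du m by auto
    then have ga: "norm (g - gradE u0) < \<epsilon>" by (simp add: g_def dist_norm)
    have "g0 \<le> ng + norm (g - gradE u0)" unfolding g0_def ng_def
      by (metis norm_minus_commute norm_triangle_sub)
    then have ng: "ng \<ge> g0 - \<epsilon>" using ga by linarith
    then have ngpos: "ng > 0" using eps g0 by linarith
    then have gnz: "g \<noteq> 0" by (auto simp: ng_def)
    define d where "d = (- (s / ng)) *\<^sub>R g"
    define us where "us = u - (s / ng) *\<^sub>R g"
    have usd: "us = u + d" by (simp add: us_def d_def)
    have nd: "norm d = s" using ngpos s by (simp add: d_def ng_def)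
    have dnz: "d \<noteq> 0" using nd s by auto
    have orth: "orth_cone d (C u)" unfolding d_def g_def
      by (rule orth_grad[OF grad ui umax])
    have dus: "dist us u0 < m/2 + m/8"
    proof -
      have "dist us u0 \<le> dist u u0 + norm d" unfolding usd dist_norm
        by (metis add.commute add_diff_eq norm_triangle_ineq)
      then show ?thesis using du nd s by linarith
    qed
    have usA: "us \<in> A" using \<rho>A dus m by (auto simp: dist_commute)
    have "C (u + d) \<inter> ball u0 r \<subseteq>
          {x + t *\<^sub>R y | x t y. x \<in> C u \<and> t \<in> {1 - \<delta> .. 1 + \<delta>} \<and> y \<in> A_gamma \<gamma> d}"
      using rP uA du m orth usA usd nd s by (auto simp: dist_commute)
    moreover have pusC: "\<phi> us \<in> C us"
      using peak usA unfolding peak_selection_def int_rel_def by auto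
    moreover have dpus: "dist (\<phi> us) u0 < min r (\<rho>1/2)" using \<eta>P dus m by auto
    ultimately obtain x t y where xty: "\<phi> us = x + t *\<^sub>R y" "x \<in> C u" "1 - \<delta> \<le> t" "t \<le> 1 + \<delta>"
      "y \<in> A_gamma \<gamma> d"
      using usd by (fastforce simp: dist_commute)
    have ny: "norm y = s" using xty(5) dnz nd by (simp add: A_gamma_def)
    have ang: "inner d y \<ge> s^2 * cos \<gamma>"
      using angle_bound[OF dnz xty(5)] gam nd by simp
    have igy: "inner g y \<le> - ng * s * cos \<gamma>"
    proof -
      have "inner d y = - (s / ng) * inner g y" by (simp add: d_def)
      then have "- (s / ng) * inner g y \<ge> s^2 * cos \<gamma>" using ang by simp
      then have "- s * inner g y \<ge> ng * (s^2 * cos \<gamma>)" using ngpos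
        by (simp add: field_simps)
      then have "s * (- inner g y) \<ge> s * (ng * s * cos \<gamma>)"
        by (simp add: power2_eq_square algebra_simps)
      then have "ng * s * cos \<gamma> \<le> - inner g y" using s(1) by (simp only: mult_le_cancel_left_pos)
      then show ?thesis by linarith
    qed
    have Ex: "E x \<le> E u" using umax xty(2) .
    have tpos: "t > 0" using xty del by linarith
    have nx: "norm (\<phi> us - x) = t * s" using xty(1) ny tpos by simp
    have B: "norm (gradE z - gradE u0) \<le> \<epsilon>" if "z \<in> ball u0 \<rho>1" for z
      using \<rho>1P[of z] that by (simp add: dist_commute) (metis dist_norm dist_commute less_imp_le)
    have pb: "\<phi> us \<in> ball u0 \<rho>1" using dpus \<rho>1 by (simp add: dist_commute)
    have xb: "x \<in> ball u0 \<rho>1"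
    proof -
      have "dist x u0 \<le> dist (\<phi> us) u0 + norm (\<phi> us - x)"
        by (metis dist_norm dist_triangle dist_commute)
      moreover have "t * s \<le> 2 * (m/8)" using xty del s tpos
        by (intro mult_mono) auto
      ultimately show ?thesis using dpus nx m by (simp add: dist_commute)
    qed
    have mv: "\<bar>(E (\<phi> us) - inner (gradE u0) (\<phi> us)) - (E x - inner (gradE u0) x)\<bar> \<le> \<epsilon> * (t * s)"
      using mvt_bound[OF grad B xb pb] nx by simp
    have iay: "inner (gradE u0) y \<le> - ng * s * cos \<gamma> + \<epsilon> * s"
    proof -
      have "inner (gradE u0) y = inner g y + inner (gradE u0 - g) y" by (simp add: inner_diff_left)
      moreover have "inner (gradE u0 - g) y \<le> \<epsilon> * s"
      proof -
        have "inner (gradE u0 - g) y \<le> norm (gradE u0 - g) * norm y"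
          using Cauchy_Schwarz_ineq2[of "gradE u0 - g" y] by linarith
        also have "\<dots> = norm (g - gradE u0) * s" by (simp add: ny norm_minus_commute)
        also have "\<dots> \<le> \<epsilon> * s" using ga s
          by (intro mult_right_mono) auto
        finally show ?thesis .
      qed
      ultimately show ?thesis using igy by linarith
    qed
    have "E (\<phi> us) - E x \<le> \<epsilon> * (t * s) + t * inner (gradE u0) y"
      using mv xty(1) by (simp add: inner_add_right algebra_simps)
    also have "\<dots> \<le> \<epsilon> * (t * s) + t * (- ng * s * cos \<gamma> + \<epsilon> * s)"
      using iay tpos by (simp add: mult_left_mono)
    also have "\<dots> = (t * s) * (2 * \<epsilon> - ng * cos \<gamma>)" by (simp add: algebra_simps)
    also have "\<dots> \<le> ((1 - \<delta>) * s) * (2 * \<epsilon> - ng * cos \<gamma>)"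
    proof -
      have "ng * cos \<gamma> \<ge> (g0 - \<epsilon>) * cos \<gamma>" using ng cg by (simp add: mult_right_mono)
      moreover have "(g0 - \<epsilon>) * cos \<gamma> \<ge> (15/16) * g0 * cos \<gamma>" using eps cg
        by (simp add: mult_right_mono)
      moreover have "g0 * cos \<gamma> = 16 * \<epsilon>" by (simp add: \<epsilon>_def)
      ultimately have "2 * \<epsilon> - ng * cos \<gamma> \<le> 0" using eps by linarith
      moreover have "(1 - \<delta>) * s \<le> t * s" using xty s by (simp add: mult_right_mono)
      ultimately show ?thesis by (simp add: mult_right_mono_neg)
    qed
    also have "\<dots> < - \<alpha> * s * ng"
    proof -
      have "ng * cos \<gamma> \<ge> (g0 - \<epsilon>) * cos \<gamma>" using ng cg by (simp add: mult_right_mono)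
      moreover have "(g0 - \<epsilon>) * cos \<gamma> \<ge> (15/16) * g0 * cos \<gamma>" using eps cg
        by (simp add: mult_right_mono)
      moreover have "g0 * cos \<gamma> = 16 * \<epsilon>" by (simp add: \<epsilon>_def)
      ultimately have "2 * \<epsilon> - ng * cos \<gamma> < - (ng * cos \<gamma>) / 2"
        using eps by linarith
      moreover have "(1 - \<delta>) * s > 0" using del s by simp
      ultimately have "((1 - \<delta>) * s) * (2 * \<epsilon> - ng * cos \<gamma>) < ((1 - \<delta>) * s) * (- (ng * cos \<gamma>) / 2)"
        by (rule mult_strict_left_mono)
      then show ?thesis by (simp add: \<alpha>_def algebra_simps)
    qed
    finally have "E (\<phi> us) - E u < - \<alpha> * s * ng" using Ex by linarith
    then show ?thesis using gnz usA s unfolding Sstar_def us_def ng_def g_def Let_def by auto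
  qed
  show ?thesis
  proof (intro exI conjI ballI impI)
    show "open (ball u0 (m/2))" by simp
    show "u0 \<in> ball u0 (m/2)" using m by simp
    show "m/8/2 > 0" using m by simp
    fix u assume u: "u \<in> ball u0 (m/2) \<inter> \<phi> ` A" and "gradE u \<noteq> 0"
    show "Sstep E gradE A \<phi> ((1 - \<delta>) * cos \<gamma> / 2) u \<subseteq> {m/8/2..}"
    proof
      fix s assume s: "s \<in> Sstep E gradE A \<phi> ((1 - \<delta>) * cos \<gamma> / 2) u"
      have s0: "m/8 \<in> Sstar E gradE A \<phi> \<alpha> u"
        using key[of u "m/8"] u m by (auto simp: dist_commute)
      have "ereal (m/8) \<le> Sup (ereal ` Sstar E gradE A \<phi> \<alpha> u)"
        using s0 by (intro Sup_upper imageI)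
      then have "ereal (m/8) / 2 \<le> Sup (ereal ` Sstar E gradE A \<phi> \<alpha> u) / 2"
        by (rule ereal_divide_right_mono) simp
      also have "\<dots> \<le> ereal s" using s unfolding Sstep_def \<alpha>_def by auto
      finally have "ereal (m/8) / 2 \<le> ereal s" .
      then show "s \<in> {m/8/2..}" by simp
    qed
  qed
qed

end
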